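(* Let $X$ be a path-connected space with base point $x_0$. Then $\mathbf{ltc}_n(X)=\mathbf{tc}_n(X)$ for every $n\ge1$, and $\mathbf{LTC}_n(X)=\mathbf{TC}_n(X)$ for every $n\ge 2$.
   Context: $I=[0,1]$. Path spaces with compact-open topology: $P_{x_0}X=\{f:I\to X\mid f(0)=x_0\}$, $\Omega_{x_0}X=\{f:I\to X\mid f(0)=f(1)=x_0\}$, $PX=\{f:I\to X\}$, $LX=\{f:I\to X\mid f(0)=f(1)\}$. Maps: $p_n:P_{x_0}X\to X^n$, $p_n(f)=(f(1/n),\dots,f((n-1)/n),f(1))$; $q_n:\Omega_{x_0}X\to X^n$, $q_n(f)=(f(1/(n+1)),\dots,f(n/(n+1)))$; $P_n:PX\to X^n$, $P_n(f)=(f(0),f(1/(n-1)),\dots,f((n-2)/(n-1)),f(1))$; $Q_n:LX\to X^n$, $Q_n(f)=(f(0),f(1/n),\dots,f((n-1)/n))$. For a map $p:E\to B$, the Schwarz genus $\mathbf{Sch}(p)$ is the least number $k$ of open sets $U_1,\dots,U_k$ covering $B$ such that over each $U_i$ there is a continuous map $s:U_i\to E$ with $p\circ s$ equal to the inclusion; $\mathbf{Sch}(p)=\infty$ if no such finite cover exists. Define $\mathbf{TC}_n(X)=\mathbf{Sch}(P_n)$ and $\mathbf{LTC}_n(X)=\mathbf{Sch}(Q_n)$ for $n\ge2$, and $\mathbf{tc}_n(X)=\mathbf{Sch}(p_n)$ and $\mathbf{ltc}_n(X)=\mathbf{Sch}(q_n)$ for $n\ge1$. *)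

theory Defs
  imports "HOL-Analysis.Analysis" "HOL-Library.Extended_Nat"
begin

abbreviation unit_I :: "real topology" where
  "unit_I \<equiv> top_of_set {0..1}"

text \<open>Compact-open topology on a set S of maps Y -> X: generated by the subbasic
  sets {f in S. f ` K \<subseteq> U}, K compact in Y, U open in X (K = {} gives S itself).\<close>
definition compact_open :: "'b topology \<Rightarrow> 'a topology \<Rightarrow> ('b \<Rightarrow> 'a) set \<Rightarrow> ('b \<Rightarrow> 'a) topology" where
  "compact_open Y X S = topology_generated_by
     {W. \<exists>K U. compactin Y K \<and> openin X U \<and> W = {f \<in> S. f ` K \<subseteq> U}}"

text \<open>Paths I -> X, represented extensionally (undefined outside [0,1]).\<close>
definition paths :: "'a topology \<Rightarrow> (real \<Rightarrow> 'a) set" where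
  "paths X = {f. continuous_map unit_I X f \<and> f \<in> extensional {0..1}}"

definition free_path_space :: "'a topology \<Rightarrow> (real \<Rightarrow> 'a) topology" where
  "free_path_space X = compact_open unit_I X (paths X)"

definition based_path_space :: "'a topology \<Rightarrow> 'a \<Rightarrow> (real \<Rightarrow> 'a) topology" where
  "based_path_space X x0 = compact_open unit_I X {f \<in> paths X. f 0 = x0}"

definition loop_space :: "'a topology \<Rightarrow> 'a \<Rightarrow> (real \<Rightarrow> 'a) topology" where
  "loop_space X x0 = compact_open unit_I X {f \<in> paths X. f 0 = x0 \<and> f 1 = x0}"

definition free_loop_space :: "'a topology \<Rightarrow> (real \<Rightarrow> 'a) topology" where
  "free_loop_space X = compact_open unit_I X {f \<in> paths X. f 0 = f 1}"

text \<open>X^n, with points the extensional functions {..<n} -> X; coordinate i (0-based).\<close>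
abbreviation power_space :: "'a topology \<Rightarrow> nat \<Rightarrow> (nat \<Rightarrow> 'a) topology" where
  "power_space X n \<equiv> product_topology (\<lambda>_. X) {..<n}"

definition p_map :: "nat \<Rightarrow> (real \<Rightarrow> 'a) \<Rightarrow> (nat \<Rightarrow> 'a)" where
  "p_map n f = restrict (\<lambda>i. f (real (Suc i) / real n)) {..<n}"

definition q_map :: "nat \<Rightarrow> (real \<Rightarrow> 'a) \<Rightarrow> (nat \<Rightarrow> 'a)" where
  "q_map n f = restrict (\<lambda>i. f (real (Suc i) / real (Suc n))) {..<n}"

definition P_map :: "nat \<Rightarrow> (real \<Rightarrow> 'a) \<Rightarrow> (nat \<Rightarrow> 'a)" where
  "P_map n f = restrict (\<lambda>i. f (real i / (real n - 1))) {..<n}"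

definition Q_map :: "nat \<Rightarrow> (real \<Rightarrow> 'a) \<Rightarrow> (nat \<Rightarrow> 'a)" where
  "Q_map n f = restrict (\<lambda>i. f (real i / real n)) {..<n}"

text \<open>Schwarz genus of p : E -> B: least k such that B is covered by k open sets,
  each admitting a continuous local section of p; \<infinity> if there is none.\<close>
definition schwarz_genus :: "'e topology \<Rightarrow> 'b topology \<Rightarrow> ('e \<Rightarrow> 'b) \<Rightarrow> enat" where
  "schwarz_genus E B p =
     (INF k \<in> {k::nat. \<exists>U::nat \<Rightarrow> 'b set.
         (\<forall>i<k. openin B (U i) \<and>
            (\<exists>s. continuous_map (subtopology B (U i)) E s \<and> (\<forall>x\<in>U i. p (s x) = x)))
         \<and> (\<Union>i<k. U i) = topspace B}. enat k)"

definition TC :: "'a topology \<Rightarrow> nat \<Rightarrow> enat" where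
  "TC X n = schwarz_genus (free_path_space X) (power_space X n) (P_map n)"

definition LTC :: "'a topology \<Rightarrow> nat \<Rightarrow> enat" where
  "LTC X n = schwarz_genus (free_loop_space X) (power_space X n) (Q_map n)"

definition tc :: "'a topology \<Rightarrow> 'a \<Rightarrow> nat \<Rightarrow> enat" where
  "tc X x0 n = schwarz_genus (based_path_space X x0) (power_space X n) (p_map n)"

definition ltc :: "'a topology \<Rightarrow> 'a \<Rightarrow> nat \<Rightarrow> enat" where
  "ltc X x0 n = schwarz_genus (loop_space X x0) (power_space X n) (q_map n)"

end

theory Submission
  imports Defs
begin

lemma topspace_co: "topspace (compact_open Y X S) = S"
  unfolding compact_open_def topology_generated_by_topspace
proof (rule equalityI)
  show "\<Union> {W. \<exists>K U. compactin Y K \<and> openin X U \<and> W = {f \<in> S. f ` K \<subseteq> U}} \<subseteq> S" by auto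
  have "S \<in> {W. \<exists>K U. compactin Y K \<and> openin X U \<and> W = {f \<in> S. f ` K \<subseteq> U}}"
    by (rule CollectI, rule exI[of _ "{}"], rule exI[of _ "{}"]) auto
  then show "S \<subseteq> \<Union> {W. \<exists>K U. compactin Y K \<and> openin X U \<and> W = {f \<in> S. f ` K \<subseteq> U}}" by blast
qed

lemma precomp_cont:
  fixes X :: "'a topology" and \<phi> :: "real \<Rightarrow> real"
  assumes phi: "continuous_map unit_I unit_I \<phi>"
    and S2: "\<And>f. f \<in> S1 \<Longrightarrow> restrict (f \<circ> \<phi>) {0..1} \<in> S2"
  shows "continuous_map (compact_open unit_I X S1) (compact_open unit_I X S2)
           (\<lambda>f. restrict (f \<circ> \<phi>) {0..1})"
proof -
  let ?T = "\<lambda>f. restrict (f \<circ> \<phi>) {0..1}"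
  let ?B = "{W. \<exists>K U. compactin unit_I K \<and> openin X U \<and> W = {f \<in> S2. f ` K \<subseteq> U}}"
  have "continuous_map (compact_open unit_I X S1) (topology_generated_by ?B) ?T"
  proof (rule continuous_on_generated_topo)
    fix W assume "W \<in> ?B"
    then obtain K U where K: "compactin unit_I K" and U: "openin X U"
      and W: "W = {f \<in> S2. f ` K \<subseteq> U}" by blast
    have Ksub: "K \<subseteq> {0..1}" using compactin_subset_topspace[OF K] by simp
    have eq: "?T -` W \<inter> topspace (compact_open unit_I X S1) = {f \<in> S1. f ` (\<phi> ` K) \<subseteq> U}"
    proof -
      have im: "restrict (f \<circ> \<phi>) {0..1} ` K = f ` (\<phi> ` K)" for f :: "real \<Rightarrow> 'a"
        using Ksub by (force simp: image_iff)
      have mem: "restrict (f \<circ> \<phi>) {0..1} \<in> W \<longleftrightarrow> f ` (\<phi> ` K) \<subseteq> U" if "f \<in> S1" for f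
        by (simp only: W mem_Collect_eq im) (use S2[OF that] in blast)
      show ?thesis unfolding topspace_co using mem by blast
    qed
    have cK: "compactin unit_I (\<phi> ` K)" using image_compactin[OF K phi] .
    show "openin (compact_open unit_I X S1) (?T -` W \<inter> topspace (compact_open unit_I X S1))"
      unfolding eq unfolding compact_open_def
      apply (rule topology_generated_by_Basis)
      apply (rule CollectI)
      apply (rule exI[of _ "\<phi> ` K"], rule exI[of _ U])
      using cK U by simp
  next
    have "\<Union> ?B = topspace (compact_open unit_I X S2)"
      unfolding compact_open_def by simp
    then show "?T ` topspace (compact_open unit_I X S1) \<subseteq> \<Union> ?B"
      using S2 by (auto simp: topspace_co)
  qed
  then show ?thesis unfolding compact_open_def .
qed

lemma precomp_path:
  assumes phi: "continuous_map unit_I unit_I \<phi>" and f: "f \<in> paths X"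
  shows "restrict (f \<circ> \<phi>) {0..1} \<in> paths X"
proof -
  have "continuous_map unit_I X (f \<circ> \<phi>)"
    using continuous_map_compose[OF phi] f by (auto simp: paths_def)
  then have "continuous_map unit_I X (restrict (f \<circ> \<phi>) {0..1})"
    by (rule continuous_map_eq) auto
  then show ?thesis by (simp add: paths_def)
qed

lemma genus_mono:
  fixes E1 :: "'e topology" and E2 :: "'f topology" and B :: "'b topology"
  assumes T: "continuous_map E1 E2 T" and p: "\<forall>e\<in>topspace E1. p2 (T e) = p1 e"
  shows "schwarz_genus E2 B p2 \<le> schwarz_genus E1 B p1"
proof -
  have key: "\<exists>U. (\<forall>i<k. openin B (U i) \<and>
            (\<exists>s. continuous_map (subtopology B (U i)) E2 s \<and> (\<forall>x\<in>U i. p2 (s x) = x)))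
         \<and> (\<Union>i<k. U i) = topspace B"
    if ex: "\<exists>U. (\<forall>i<k. openin B (U i) \<and>
            (\<exists>s. continuous_map (subtopology B (U i)) E1 s \<and> (\<forall>x\<in>U i. p1 (s x) = x)))
         \<and> (\<Union>i<k. U i) = topspace B" for k :: nat
  proof -
    obtain U where H: "\<forall>i<k. openin B (U i) \<and>
            (\<exists>s. continuous_map (subtopology B (U i)) E1 s \<and> (\<forall>x\<in>U i. p1 (s x) = x))"
      and cov: "(\<Union>i<k. U i) = topspace B" by (rule exE[OF ex]) (erule conjE, assumption)
    have "\<forall>i<k. openin B (U i) \<and>
            (\<exists>s. continuous_map (subtopology B (U i)) E2 s \<and> (\<forall>x\<in>U i. p2 (s x) = x))"
    proof (intro allI impI conjI)
      fix i assume i: "i < k"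
      then show "openin B (U i)" using H by blast
      obtain s where s: "continuous_map (subtopology B (U i)) E1 s" "\<forall>x\<in>U i. p1 (s x) = x"
        using H i by blast
      have sub: "U i \<subseteq> topspace B" using H i openin_subset by blast
      have "\<forall>x\<in>U i. p2 ((T \<circ> s) x) = x"
      proof
        fix x assume x: "x \<in> U i"
        then have "x \<in> topspace (subtopology B (U i))" using sub by auto
        then have "s x \<in> topspace E1" using continuous_map_image_subset_topspace[OF s(1)] by blast
        then show "p2 ((T \<circ> s) x) = x" using p s(2) x by simp
      qed
      then show "\<exists>s. continuous_map (subtopology B (U i)) E2 s \<and> (\<forall>x\<in>U i. p2 (s x) = x)"
        using continuous_map_compose[OF s(1) T] by blast
    qed
    then show ?thesis using cov by blast
  qed
  show ?thesis unfolding schwarz_genus_def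
    by (rule INF_superset_mono) (use key in auto)
qed

definition tent :: "real \<Rightarrow> real \<Rightarrow> real" where
  "tent c t = min (t / c) ((1 - t) / (1 - c))"

lemma tent_cont: assumes "0 < c" "c < 1" shows "continuous_map unit_I unit_I (tent c)"
proof -
  have "continuous_on {0..1} (tent c)" unfolding tent_def using assms by (intro continuous_intros) auto
  moreover have "tent c t \<in> {0..1}" if "t \<in> {0..1}" for t
  proof -
    have "0 \<le> t / c" "0 \<le> (1 - t) / (1 - c)" using that assms by auto
    then have "0 \<le> tent c t" unfolding tent_def by simp
    moreover have "tent c t \<le> 1"
    proof (cases "t \<le> c")
      case True
      then have "t / c \<le> 1" using assms by (simp add: divide_le_eq)
      then show ?thesis unfolding tent_def by linarith
    next
      case False
      then have "(1 - t) / (1 - c) \<le> 1" using assms by (simp add: divide_le_eq)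
      then show ?thesis unfolding tent_def by linarith
    qed
    ultimately show ?thesis by simp
  qed
  ultimately show ?thesis by auto
qed

lemma tent_left: assumes "0 < c" "c < 1" "t \<le> c" shows "tent c t = t / c"
proof -
  have "t / c \<le> 1" using assms by (simp add: divide_le_eq)
  moreover have "1 \<le> (1 - t) / (1 - c)" using assms by (simp add: le_divide_eq)
  ultimately have "t / c \<le> (1 - t) / (1 - c)" by linarith
  then show ?thesis unfolding tent_def by simp
qed

lemma tent_0: assumes "0 < c" "c < 1" shows "tent c 0 = 0" using tent_left[OF assms] assms by simp
lemma tent_1: assumes "0 < c" "c < 1" shows "tent c 1 = 0"
proof -
  have "(1 - 1) / (1 - c) \<le> 1 / c" using assms by simp
  then show ?thesis unfolding tent_def by (simp add: min_def)
qed

lemma scale_cont: assumes "0 < c" "c \<le> 1" shows "continuous_map unit_I unit_I (\<lambda>t. c * t)"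
proof -
  have "continuous_on {0..1} (\<lambda>t::real. c * t)" by (intro continuous_intros)
  moreover have "c * t \<in> {0..1}" if "t \<in> {0..1}" for t
    using that assms by (auto simp: mult_le_one)
  ultimately show ?thesis by auto
qed


lemma restrict_in: "t \<in> {0..1} \<Longrightarrow> restrict (f \<circ> \<phi>) {0..1} t = f (\<phi> t)" by simp

theorem mainTheorem3:
  fixes X :: "'a topology" and x0 :: 'a
  assumes "path_connected_space X" and "x0 \<in> topspace X"
  shows "(\<forall>n\<ge>1. ltc X x0 n = tc X x0 n) \<and> (\<forall>n\<ge>2. LTC X n = TC X n)"
proof (intro conjI allI impI)
  fix n :: nat assume n: "n \<ge> 1"
  define c :: real where "c = real n / real (Suc n)"
  have c0: "0 < c" and c1: "c < 1" using n unfolding c_def by (auto simp: field_simps)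
  have npos: "real n > 0" using n by simp
  let ?L = "{f \<in> paths X. f 0 = x0 \<and> f 1 = x0}"
  let ?P = "{f \<in> paths X. f 0 = x0}"
  have A: "tc X x0 n \<le> ltc X x0 n"
    unfolding tc_def ltc_def based_path_space_def loop_space_def
  proof (rule genus_mono)
    show "continuous_map (compact_open unit_I X ?L) (compact_open unit_I X ?P)
           (\<lambda>f. restrict (f \<circ> (\<lambda>t. c * t)) {0..1})"
      by (rule precomp_cont[OF scale_cont[OF c0 less_imp_le[OF c1]]]) (use precomp_path[OF scale_cont[OF c0 less_imp_le[OF c1]]] in auto)
    show "\<forall>e\<in>topspace (compact_open unit_I X ?L).
            p_map n (restrict (e \<circ> (\<lambda>t. c * t)) {0..1}) = q_map n e"
    proof (intro ballI ext)
      fix e i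
      have "c * (real (Suc i) / real n) = real (Suc i) / real (Suc n)"
        using npos unfolding c_def by (simp del: of_nat_Suc)
      moreover have "i < n \<Longrightarrow> real (Suc i) / real n \<in> {0..1}" by auto
      ultimately show "p_map n (restrict (e \<circ> (\<lambda>t. c * t)) {0..1}) i = q_map n e i"
        unfolding p_map_def q_map_def by auto
    qed
  qed
  have B: "ltc X x0 n \<le> tc X x0 n"
    unfolding tc_def ltc_def based_path_space_def loop_space_def
  proof (rule genus_mono)
    show "continuous_map (compact_open unit_I X ?P) (compact_open unit_I X ?L)
           (\<lambda>f. restrict (f \<circ> tent c) {0..1})"
      by (rule precomp_cont[OF tent_cont[OF c0 c1]]) (use precomp_path[OF tent_cont[OF c0 c1]] tent_0[OF c0 c1] tent_1[OF c0 c1] in auto)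
    show "\<forall>e\<in>topspace (compact_open unit_I X ?P).
            q_map n (restrict (e \<circ> tent c) {0..1}) = p_map n e"
    proof (intro ballI ext)
      fix e i
      have "i < n \<Longrightarrow> tent c (real (Suc i) / real (Suc n)) = real (Suc i) / real n"
      proof -
        assume i: "i < n"
        have "real (Suc i) / real (Suc n) \<le> c" unfolding c_def by (rule divide_right_mono) (use i in auto)
        then have "tent c (real (Suc i) / real (Suc n)) = real (Suc i) / real (Suc n) / c"
          using c0 c1 by (rule tent_left[rotated 2])
        also have "\<dots> = real (Suc i) / real n" unfolding c_def using npos by (simp del: of_nat_Suc)
        finally show ?thesis .
      qed
      moreover have "i < n \<Longrightarrow> real (Suc i) / real (Suc n) \<in> {0..1}" by auto
      ultimately show "q_map n (restrict (e \<circ> tent c) {0..1}) i = p_map n e i"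
        unfolding p_map_def q_map_def by auto
    qed
  qed
  show "ltc X x0 n = tc X x0 n" using A B by simp
next
  fix n :: nat assume n: "n \<ge> 2"
  define c :: real where "c = (real n - 1) / real n"
  have c0: "0 < c" and c1: "c < 1" using n unfolding c_def by (auto simp: field_simps)
  have npos: "real n > 0" using n by simp
  let ?L = "{f \<in> paths X. f 0 = f 1}"
  have A: "TC X n \<le> LTC X n"
    unfolding TC_def LTC_def free_path_space_def free_loop_space_def
  proof (rule genus_mono)
    show "continuous_map (compact_open unit_I X ?L) (compact_open unit_I X (paths X))
           (\<lambda>f. restrict (f \<circ> (\<lambda>t. c * t)) {0..1})"
      by (rule precomp_cont[OF scale_cont[OF c0 less_imp_le[OF c1]]]) (use precomp_path[OF scale_cont[OF c0 less_imp_le[OF c1]]] in auto)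
    show "\<forall>e\<in>topspace (compact_open unit_I X ?L).
            P_map n (restrict (e \<circ> (\<lambda>t. c * t)) {0..1}) = Q_map n e"
    proof (intro ballI ext)
      fix e i
      have "c * (real i / (real n - 1)) = real i / real n"
        using n unfolding c_def by simp
      moreover have "i < n \<Longrightarrow> real i / (real n - 1) \<in> {0..1}" using n by (auto simp: field_simps)
      ultimately show "P_map n (restrict (e \<circ> (\<lambda>t. c * t)) {0..1}) i = Q_map n e i"
        unfolding P_map_def Q_map_def by auto
    qed
  qed
  have B: "LTC X n \<le> TC X n"
    unfolding TC_def LTC_def free_path_space_def free_loop_space_def
  proof (rule genus_mono)
    show "continuous_map (compact_open unit_I X (paths X)) (compact_open unit_I X ?L)
           (\<lambda>f. restrict (f \<circ> tent c) {0..1})"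
      by (rule precomp_cont[OF tent_cont[OF c0 c1]]) (use precomp_path[OF tent_cont[OF c0 c1]] tent_0[OF c0 c1] tent_1[OF c0 c1] in auto)
    show "\<forall>e\<in>topspace (compact_open unit_I X (paths X)).
            Q_map n (restrict (e \<circ> tent c) {0..1}) = P_map n e"
    proof (intro ballI ext)
      fix e i
      have "i < n \<Longrightarrow> tent c (real i / real n) = real i / (real n - 1)"
      proof -
        assume i: "i < n"
        have "real i / real n \<le> c" unfolding c_def by (rule divide_right_mono) (use i in auto)
        then have "tent c (real i / real n) = real i / real n / c"
          using c0 c1 by (rule tent_left[rotated 2])
        also have "\<dots> = real i / (real n - 1)" unfolding c_def using n by simp
        finally show ?thesis .
      qed
      moreover have "i < n \<Longrightarrow> real i / real n \<in> {0..1}" by auto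
      ultimately show "Q_map n (restrict (e \<circ> tent c) {0..1}) i = P_map n e i"
        unfolding P_map_def Q_map_def by auto
    qed
  qed
  show "LTC X n = TC X n" using A B by simp
qed

end
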